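(* Let $f\colon X\to Y$ be a standard proper map between standard coarse spaces, where $X$ is non-empty and $Y$ is connected. If ${}^*f\colon\partial_SX\to\partial_SY$ is coarsely surjective, then $f$ is coarsely surjective.
   Context: Nonstandard framework with transfer and sufficient saturation. Coarse structure $\mathcal{C}_X$: family of subsets of $X\times X$ containing the diagonal, closed under subsets, finite unions, inverses, compositions; connected if every singleton $\{(x,y)\}$ is controlled. Induced prebornology $\mathcal{B}_X=\{B:B\times B\in\mathcal{C}_X\}$; proper map: preimages of bounded sets are bounded. $\mathrm{INF}(X)={}^*X\setminus\bigcup_{B\in\mathcal{B}_X}{}^*B$; $\partial_SX$ is $\mathrm{INF}(X)$ with coarse structure $\{E\subseteq\mathrm{INF}(X)^2:E\subseteq{}^*F,\ F\in\mathcal{C}_X\}$. A map $g\colon Z\to W$ of coarse spaces is coarsely surjective if $E[g(Z)]=W$ for some controlled $E$ of $W$ (here ${}^*f$ is regarded as a map $\partial_SX\to\partial_SY$, assuming it maps $\mathrm{INF}(X)$ into $\mathrm{INF}(Y)$). *)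

theory Defs
  imports Main
begin

definition coarse_structure :: "'a set \<Rightarrow> ('a \<times> 'a) set set \<Rightarrow> bool" where
  "coarse_structure X C \<longleftrightarrow>
     (\<forall>E\<in>C. E \<subseteq> X \<times> X) \<and>
     Id_on X \<in> C \<and>
     (\<forall>E\<in>C. \<forall>E'. E' \<subseteq> E \<longrightarrow> E' \<in> C) \<and>
     (\<forall>E\<in>C. \<forall>F\<in>C. E \<union> F \<in> C) \<and>
     (\<forall>E\<in>C. E\<inverse> \<in> C) \<and>
     (\<forall>E\<in>C. \<forall>F\<in>C. E O F \<in> C)"

definition coarse_connected :: "'a set \<Rightarrow> ('a \<times> 'a) set set \<Rightarrow> bool" where
  "coarse_connected X C \<longleftrightarrow> (\<forall>x\<in>X. \<forall>y\<in>X. {(x, y)} \<in> C)"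

definition bounded_sets :: "'a set \<Rightarrow> ('a \<times> 'a) set set \<Rightarrow> 'a set set" where
  "bounded_sets X C = {B. B \<subseteq> X \<and> B \<times> B \<in> C}"

definition proper_map ::
  "'a set \<Rightarrow> ('a \<times> 'a) set set \<Rightarrow> 'b set \<Rightarrow> ('b \<times> 'b) set set \<Rightarrow> ('a \<Rightarrow> 'b) \<Rightarrow> bool" where
  "proper_map X CX Y CY f \<longleftrightarrow>
     f ` X \<subseteq> Y \<and> (\<forall>B\<in>bounded_sets Y CY. f -` B \<inter> X \<in> bounded_sets X CX)"

definition coarsely_surjective ::
  "'c set \<Rightarrow> 'd set \<Rightarrow> ('d \<times> 'd) set set \<Rightarrow> ('c \<Rightarrow> 'd) \<Rightarrow> bool" where
  "coarsely_surjective Z W CW g \<longleftrightarrow> (\<exists>E\<in>CW. E `` (g ` Z) = W)"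

definition is_ultrafilter :: "'i filter \<Rightarrow> bool" where
  "is_ultrafilter U \<longleftrightarrow> U \<noteq> bot \<and>
     (\<forall>A. eventually (\<lambda>i. i \<in> A) U \<or> eventually (\<lambda>i. i \<notin> A) U)"

text \<open>Nonstandard elements are represented by functions 'i => 'a (modulo U);
  all sets below are closed under U-almost-everywhere equality.\<close>

definition star_set :: "'i filter \<Rightarrow> 'a set \<Rightarrow> ('i \<Rightarrow> 'a) set" where
  "star_set U A = {u. eventually (\<lambda>i. u i \<in> A) U}"

definition star_rel :: "'i filter \<Rightarrow> ('a \<times> 'a) set \<Rightarrow> (('i \<Rightarrow> 'a) \<times> ('i \<Rightarrow> 'a)) set" where
  "star_rel U E = {(u, v). eventually (\<lambda>i. (u i, v i) \<in> E) U}"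

definition star_fun :: "('a \<Rightarrow> 'b) \<Rightarrow> ('i \<Rightarrow> 'a) \<Rightarrow> ('i \<Rightarrow> 'b)" where
  "star_fun f u = f \<circ> u"

definition internal_set :: "'i filter \<Rightarrow> ('i \<Rightarrow> 'a set) \<Rightarrow> ('i \<Rightarrow> 'a) set" where
  "internal_set U A = {u. eventually (\<lambda>i. u i \<in> A i) U}"

definition saturated_for :: "'i filter \<Rightarrow> 'b itself \<Rightarrow> bool" where
  "saturated_for U (_ :: 'b itself) \<longleftrightarrow>
     (\<forall>(J :: ('b \<times> 'b) set set) (A :: ('b \<times> 'b) set \<Rightarrow> 'i \<Rightarrow> 'b set).
        (\<forall>J0. finite J0 \<and> J0 \<subseteq> J \<longrightarrow> (\<Inter>j\<in>J0. internal_set U (A j)) \<noteq> {}) \<longrightarrow>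
        (\<Inter>j\<in>J. internal_set U (A j)) \<noteq> {})"

definition INF_pts :: "'i filter \<Rightarrow> 'a set \<Rightarrow> ('a \<times> 'a) set set \<Rightarrow> ('i \<Rightarrow> 'a) set" where
  "INF_pts U X C = star_set U X - (\<Union>B\<in>bounded_sets X C. star_set U B)"

definition boundary_structure ::
  "'i filter \<Rightarrow> 'a set \<Rightarrow> ('a \<times> 'a) set set \<Rightarrow> (('i \<Rightarrow> 'a) \<times> ('i \<Rightarrow> 'a)) set set" where
  "boundary_structure U X C =
     {E. E \<subseteq> INF_pts U X C \<times> INF_pts U X C \<and> (\<exists>F\<in>C. E \<subseteq> star_rel U F)}"

end

theory Submission
  imports Defs
begin

lemma fin_union_ctrl:
  assumes cs: "coarse_structure Y CY" and "finite J0" "J0 \<subseteq> CY"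
  shows "Id_on Y \<union> \<Union>J0 \<in> CY"
  using assms(2,3)
proof (induction J0 rule: finite_induct)
  case empty then show ?case using cs by (simp add: coarse_structure_def)
next
  case (insert x F)
  then have "x \<in> CY" "Id_on Y \<union> \<Union>F \<in> CY" by auto
  then have "x \<union> (Id_on Y \<union> \<Union>F) \<in> CY" using cs unfolding coarse_structure_def by blast
  then show ?case by (simp add: Un_ac)
qed

theorem mainTheorem14:
  fixes U :: "'i filter"
    and X :: "'a set" and CX :: "('a \<times> 'a) set set"
    and Y :: "'b set" and CY :: "('b \<times> 'b) set set"
    and f :: "'a \<Rightarrow> 'b"
  assumes "is_ultrafilter U"
    and "saturated_for U TYPE('b)"
    and "coarse_structure X CX"
    and "coarse_structure Y CY"
    and "X \<noteq> {}"
    and "coarse_connected Y CY"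
    and "proper_map X CX Y CY f"
    and "coarsely_surjective (INF_pts U X CX) (INF_pts U Y CY) (boundary_structure U Y CY) (star_fun f)"
  shows "coarsely_surjective X Y CY f"
proof (rule ccontr)
  assume ncs: "\<not> coarsely_surjective X Y CY f"
  note cs = assms(4)
  have nb: "U \<noteq> bot" using assms(1) by (simp add: is_ultrafilter_def)
  have fX: "f ` X \<subseteq> Y" using assms(7) by (simp add: proper_map_def)
  obtain x0 where x0: "x0 \<in> X" using assms(5) by blast
  define A where "A = (\<lambda>E::('b\<times>'b) set. \<lambda>i::'i. Y - E `` (f ` X))"
  have "(\<Inter>j\<in>CY. internal_set U (A j)) \<noteq> {}"
  proof -
    have "\<forall>J0. finite J0 \<and> J0 \<subseteq> CY \<longrightarrow> (\<Inter>j\<in>J0. internal_set U (A j)) \<noteq> {}"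
    proof (intro allI impI)
      fix J0 assume h: "finite J0 \<and> J0 \<subseteq> CY"
      let ?E = "Id_on Y \<union> \<Union>J0"
      have E: "?E \<in> CY" using fin_union_ctrl[OF cs] h by blast
      have "?E `` (f ` X) \<noteq> Y" using ncs E by (auto simp: coarsely_surjective_def)
      moreover have "?E \<subseteq> Y \<times> Y" using E cs by (simp add: coarse_structure_def)
      ultimately obtain y where y: "y \<in> Y" "y \<notin> ?E `` (f ` X)" by blast
      have "(\<lambda>i. y) \<in> (\<Inter>j\<in>J0. internal_set U (A j))"
        using y by (auto simp: internal_set_def A_def Image_def)
      then show "(\<Inter>j\<in>J0. internal_set U (A j)) \<noteq> {}" by blast
    qed
    then show ?thesis using assms(2) unfolding saturated_for_def by blast
  qed
  then obtain ys where ys: "\<And>E. E \<in> CY \<Longrightarrow> eventually (\<lambda>i. ys i \<in> Y \<and> ys i \<notin> E `` (f ` X)) U"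
    by (auto simp: internal_set_def A_def)
  have IdY: "Id_on Y \<in> CY" using cs by (simp add: coarse_structure_def)
  have ysY: "ys \<in> star_set U Y" using ys[OF IdY] by (auto simp: star_set_def elim: eventually_mono)
  have "ys \<notin> star_set U B" if B: "B \<in> bounded_sets Y CY" for B
  proof
    assume yB: "ys \<in> star_set U B"
    show False
    proof (cases "B = {}")
      case True then show False using yB nb by (simp add: star_set_def)
    next
      case False
      then obtain b0 where b0: "b0 \<in> B" by blast
      have BB: "B \<times> B \<in> CY" "B \<subseteq> Y" using B by (auto simp: bounded_sets_def)
      have "{(f x0, b0)} \<in> CY" using assms(6) fX x0 b0 BB by (auto simp: coarse_connected_def)
      then have Ec: "{(f x0, b0)} O (B \<times> B) \<in> CY" using BB cs unfolding coarse_structure_def by blast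
      have Bsub: "B \<subseteq> ({(f x0, b0)} O (B \<times> B)) `` (f ` X)" using x0 b0 by blast
      have "eventually (\<lambda>i. False) U"
        using eventually_conj[OF ys[OF Ec] yB[unfolded star_set_def, simplified]]
      proof (rule eventually_mono)
        fix i assume "(ys i \<in> Y \<and> ys i \<notin> ({(f x0, b0)} O (B \<times> B)) `` (f ` X)) \<and> ys i \<in> B"
        then show False using Bsub by blast
      qed
      then show False using nb by simp
    qed
  qed
  with ysY have ysI: "ys \<in> INF_pts U Y CY" by (auto simp: INF_pts_def)
  obtain E' where E': "E' \<in> boundary_structure U Y CY"
    "E' `` (star_fun f ` INF_pts U X CX) = INF_pts U Y CY"
    using assms(8) by (auto simp: coarsely_surjective_def)
  obtain F where F: "F \<in> CY" "E' \<subseteq> star_rel U F" using E'(1) by (auto simp: boundary_structure_def)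
  from ysI E'(2) obtain u where u: "u \<in> INF_pts U X CX" "(star_fun f u, ys) \<in> E'" by blast
  have uX: "eventually (\<lambda>i. u i \<in> X) U" using u(1) by (simp add: INF_pts_def star_set_def)
  have uF: "eventually (\<lambda>i. (f (u i), ys i) \<in> F) U" using u(2) F(2)
    by (auto simp: star_rel_def star_fun_def)
  have "eventually (\<lambda>i. False) U"
    using eventually_conj[OF ys[OF F(1)] eventually_conj[OF uX uF]]
    by (rule eventually_mono) blast
  then show False using nb by simp
qed

end
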